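(* Let $G$ be an infinite, connected, locally finite graph, let $S$ be a finite resolving set of $G$, and let $\mathcal P$ be a set of metric rays of $G$ whose vertex sets are pairwise disjoint. For each $P\in\mathcal P$ with ordered vertex set $\{u_0,u_1,\dots\}$, let $u^P$ denote the vertex $u_{i(P,S)}$ of $P$. Then $S$ doubly resolves the set $\{u^P: P\in\mathcal P\}$.
   Context: $d$ denotes shortest-path distance in $G$. A vertex $x$ resolves $u,v$ if $d(u,x)\ne d(v,x)$; $S$ is a resolving set if every pair of distinct vertices is resolved by some vertex of $S$. For a finite ordered set $S=\{x_1,\dots,x_n\}$, $r(u\mid S)=(d(u,x_1),\dots,d(u,x_n))$. A metric ray of $G$ with endpoint $u_0$ is an infinite subgraph $P$ whose vertices admit an ordering $u_0,u_1,u_2,\dots$ (all distinct) with $u_k$ adjacent to $u_{k+1}$ in $P$ and $d_G(u_0,u_k)=k$ for all $k\ge 0$. For a finite set $S$ and a metric ray $P$, $i(P,S)$ is the minimum integer $i_0\ge0$ such that $r(u_{i_0+k}\mid S)=r(u_{i_0}\mid S)+(k,\dots,k)$ for every $k\ge 0$ (such an $i_0$ always exists). Two vertices $x,y$ doubly resolve a pair $u,v$ if $d(u,x)-d(v,x)\ne d(u,y)-d(v,y)$; $S$ doubly resolves a set $U$ if every pair of distinct vertices of $U$ is doubly resolved by some two vertices of $S$. *)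

theory Defs
  imports Main
begin

definition graph :: "'a set \<Rightarrow> ('a \<Rightarrow> 'a \<Rightarrow> bool) \<Rightarrow> bool" where
  "graph V E \<longleftrightarrow> (\<forall>x y. E x y \<longrightarrow> x \<in> V \<and> y \<in> V \<and> E y x \<and> x \<noteq> y)"

definition connected_graph :: "'a set \<Rightarrow> ('a \<Rightarrow> 'a \<Rightarrow> bool) \<Rightarrow> bool" where
  "connected_graph V E \<longleftrightarrow> (\<forall>x\<in>V. \<forall>y\<in>V. \<exists>n. (E ^^ n) x y)"

definition locally_finite :: "'a set \<Rightarrow> ('a \<Rightarrow> 'a \<Rightarrow> bool) \<Rightarrow> bool" where
  "locally_finite V E \<longleftrightarrow> (\<forall>v\<in>V. finite {w. E v w})"

definition gdist :: "('a \<Rightarrow> 'a \<Rightarrow> bool) \<Rightarrow> 'a \<Rightarrow> 'a \<Rightarrow> nat" where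
  "gdist E x y = (LEAST n. (E ^^ n) x y)"

definition resolving_set :: "'a set \<Rightarrow> ('a \<Rightarrow> 'a \<Rightarrow> bool) \<Rightarrow> 'a set \<Rightarrow> bool" where
  "resolving_set V E S \<longleftrightarrow> S \<subseteq> V \<and>
     (\<forall>u\<in>V. \<forall>v\<in>V. u \<noteq> v \<longrightarrow> (\<exists>x\<in>S. gdist E u x \<noteq> gdist E v x))"

definition metric_ray :: "('a \<Rightarrow> 'a \<Rightarrow> bool) \<Rightarrow> (nat \<Rightarrow> 'a) \<Rightarrow> bool" where
  "metric_ray E u \<longleftrightarrow> inj u \<and> (\<forall>k. E (u k) (u (Suc k))) \<and> (\<forall>k. gdist E (u 0) (u k) = k)"

definition ray_index :: "('a \<Rightarrow> 'a \<Rightarrow> bool) \<Rightarrow> (nat \<Rightarrow> 'a) \<Rightarrow> 'a set \<Rightarrow> nat" where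
  "ray_index E u S = (LEAST i0. \<forall>k. \<forall>x\<in>S. gdist E (u (i0 + k)) x = gdist E (u i0) x + k)"

definition doubly_resolves :: "('a \<Rightarrow> 'a \<Rightarrow> bool) \<Rightarrow> 'a set \<Rightarrow> 'a set \<Rightarrow> bool" where
  "doubly_resolves E S U \<longleftrightarrow> (\<forall>u\<in>U. \<forall>v\<in>U. u \<noteq> v \<longrightarrow>
     (\<exists>x\<in>S. \<exists>y\<in>S. int (gdist E u x) - int (gdist E v x) \<noteq> int (gdist E u y) - int (gdist E v y)))"

end

theory Submission
  imports Defs
begin

lemma rp_trans: "(E ^^ m) x y \<Longrightarrow> (E ^^ n) y z \<Longrightarrow> (E ^^ (m + n)) x z"
  by (auto simp: relpowp_add)

lemma rp_sym: assumes "graph V E" shows "(E ^^ n) x y \<Longrightarrow> (E ^^ n) y x"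
proof (induction n arbitrary: x y)
  case 0 then show ?case by simp
next
  case (Suc n)
  from Suc.prems obtain w where "(E ^^ n) x w" "E w y" by (rule relpowp_Suc_E)
  then have "E y w" "(E ^^ n) w x" using assms Suc.IH unfolding graph_def by auto
  then show ?case by (rule relpowp_Suc_I2)
qed

lemma gdist_wit: "connected_graph V E \<Longrightarrow> x \<in> V \<Longrightarrow> y \<in> V \<Longrightarrow> (E ^^ gdist E x y) x y"
  unfolding gdist_def connected_graph_def by (meson LeastI_ex)

lemma gdist_le: "(E ^^ n) x y \<Longrightarrow> gdist E x y \<le> n"
  unfolding gdist_def by (rule Least_le)

lemma gdist_tri: "connected_graph V E \<Longrightarrow> x \<in> V \<Longrightarrow> y \<in> V \<Longrightarrow> z \<in> V \<Longrightarrow>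
  gdist E x z \<le> gdist E x y + gdist E y z"
  by (meson gdist_le gdist_wit rp_trans)

lemma gdist_sym: "graph V E \<Longrightarrow> connected_graph V E \<Longrightarrow> x \<in> V \<Longrightarrow> y \<in> V \<Longrightarrow>
  gdist E x y = gdist E y x"
  by (meson antisym gdist_le gdist_wit rp_sym)

lemma gdist_adj: "E a b \<Longrightarrow> gdist E a b \<le> 1"
  using gdist_le[of 1 E a b] by (simp only: relpowp_1)

lemma ray_in_V: "graph V E \<Longrightarrow> metric_ray E u \<Longrightarrow> u k \<in> V"
  unfolding graph_def metric_ray_def by blast

lemma ray_one:
  assumes g: "graph V E" and c: "connected_graph V E" and r: "metric_ray E u" and x: "x \<in> V"
  shows "\<exists>k0. \<forall>k. gdist E (u (k0 + k)) x = gdist E (u k0) x + k"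
proof -
  have uV: "\<And>k. u k \<in> V" using ray_in_V g r by blast
  define g' where "g' k = int (gdist E (u k) x) - int k" for k
  have dec: "g' (Suc k) \<le> g' k" for k
  proof -
    have "E (u k) (u (Suc k))" using r unfolding metric_ray_def by blast
    then have "gdist E (u (Suc k)) (u k) \<le> 1"
      using gdist_adj gdist_sym[OF g c uV uV] by metis
    then have "gdist E (u (Suc k)) x \<le> 1 + gdist E (u k) x"
      using gdist_tri[OF c uV uV x, of "Suc k" k] by linarith
    then show ?thesis unfolding g'_def by simp
  qed
  have lb: "g' k \<ge> - int (gdist E (u 0) x)" for k
  proof -
    have "k = gdist E (u 0) (u k)" using r unfolding metric_ray_def by simp
    also have "\<dots> \<le> gdist E (u 0) x + gdist E x (u k)" using gdist_tri[OF c uV x uV] by blast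
    also have "gdist E x (u k) = gdist E (u k) x" using gdist_sym[OF g c x uV] .
    finally show ?thesis unfolding g'_def by simp
  qed
  define h where "h k = nat (g' k + int (gdist E (u 0) x))" for k
  define m where "m = (LEAST v. v \<in> range h)"
  have "m \<in> range h" unfolding m_def by (rule LeastI) auto
  then obtain k0 where k0: "h k0 = m" by auto
  have hm: "h k0 \<le> h k" for k unfolding k0 m_def by (rule Least_le) auto
  have decn: "g' (k0 + k) \<le> g' k0" for k
  proof (induction k)
    case 0 then show ?case by simp
  next
    case (Suc k) then show ?case using dec[of "k0 + k"] by simp
  qed
  have "g' (k0 + k) = g' k0" for k
    using hm[of "k0 + k"] decn[of k] lb[of k0] lb[of "k0+k"] unfolding h_def by simp
  then have "int (gdist E (u (k0 + k)) x) = int (gdist E (u k0) x) + int k" for k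
  proof -
    have "g' (k0 + k) = g' k0" by fact
    then show ?thesis unfolding g'_def by simp
  qed
  then show ?thesis by (intro exI[of _ k0]) (metis of_nat_add of_nat_eq_iff)
qed

lemma ray_mono:
  assumes "\<forall>k. gdist E (u (i + k)) x = gdist E (u i) x + k" and "i \<le> j"
  shows "\<forall>k. gdist E (u (j + k)) x = gdist E (u j) x + k"
proof
  fix k
  obtain d where j: "j = i + d" using assms(2) le_Suc_ex by blast
  have "gdist E (u (i + (d + k))) x = gdist E (u i) x + (d + k)" using assms(1) by blast
  then have "gdist E (u (j + k)) x = gdist E (u i) x + (d + k)" using j
    by (simp add: add.assoc)
  moreover have "gdist E (u j) x = gdist E (u i) x + d" using assms(1) j by blast
  ultimately show "gdist E (u (j + k)) x = gdist E (u j) x + k" by simp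
qed

lemma ray_index_prop:
  assumes g: "graph V E" and c: "connected_graph V E" and r: "metric_ray E u"
    and S: "finite S" "S \<subseteq> V"
  shows "\<forall>k. \<forall>x\<in>S. gdist E (u (ray_index E u S + k)) x = gdist E (u (ray_index E u S)) x + k"
proof -
  have "\<forall>x\<in>S. \<exists>k0. \<forall>k. gdist E (u (k0 + k)) x = gdist E (u k0) x + k"
    using ray_one[OF g c r] S by blast
  then obtain f where f: "\<forall>x\<in>S. \<forall>k. gdist E (u (f x + k)) x = gdist E (u (f x)) x + k"
    by metis
  define i0 where "i0 = Max (insert 0 (f ` S))"
  have "\<forall>x\<in>S. f x \<le> i0" unfolding i0_def using S by auto
  then have "\<forall>k. \<forall>x\<in>S. gdist E (u (i0 + k)) x = gdist E (u i0) x + k"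
  proof (intro allI ballI)
    fix k x assume le: "\<forall>x\<in>S. f x \<le> i0" and xS: "x \<in> S"
    have "\<forall>k. gdist E (u (i0 + k)) x = gdist E (u i0) x + k"
      by (rule ray_mono[of E u "f x" x i0]) (use f le xS in auto)
    then show "gdist E (u (i0 + k)) x = gdist E (u i0) x + k" by blast
  qed
  then show ?thesis unfolding ray_index_def by (rule LeastI)
qed

theorem lemma6:
  fixes V :: "'a set" and E :: "'a \<Rightarrow> 'a \<Rightarrow> bool" and S :: "'a set"
    and \<P> :: "(nat \<Rightarrow> 'a) set"
  assumes "graph V E" and "infinite V" and "connected_graph V E" and "locally_finite V E"
    and "finite S" and "resolving_set V E S"
    and "\<forall>P\<in>\<P>. metric_ray E P"
    and "\<forall>P\<in>\<P>. \<forall>Q\<in>\<P>. P \<noteq> Q \<longrightarrow> range P \<inter> range Q = {}"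
  shows "doubly_resolves E S {P (ray_index E P S) | P. P \<in> \<P>}"
  unfolding doubly_resolves_def
proof (intro ballI impI)
  have SV: "S \<subseteq> V" using assms(6) unfolding resolving_set_def by blast
  have res: "\<And>a b. a \<in> V \<Longrightarrow> b \<in> V \<Longrightarrow> a \<noteq> b \<Longrightarrow> \<exists>x\<in>S. gdist E a x \<noteq> gdist E b x"
    using assms(6) unfolding resolving_set_def by blast
  fix a b assume a: "a \<in> {P (ray_index E P S) | P. P \<in> \<P>}" and b: "b \<in> {P (ray_index E P S) | P. P \<in> \<P>}"
    and ab: "a \<noteq> b"
  from a obtain P where P: "P \<in> \<P>" "a = P (ray_index E P S)" by blast
  from b obtain Q where Q: "Q \<in> \<P>" "b = Q (ray_index E Q S)" by blast
  have PQ: "P \<noteq> Q" using P Q ab by blast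
  have disj: "range P \<inter> range Q = {}" using assms(8) P Q PQ by blast
  have rP: "metric_ray E P" and rQ: "metric_ray E Q" using assms(7) P Q by auto
  note pP = ray_index_prop[OF assms(1) assms(3) rP assms(5) SV]
  note pQ = ray_index_prop[OF assms(1) assms(3) rQ assms(5) SV]
  have aV: "a \<in> V" and bV: "b \<in> V" using P Q ray_in_V[OF assms(1)] rP rQ by auto
  show "\<exists>x\<in>S. \<exists>y\<in>S. int (gdist E a x) - int (gdist E b x) \<noteq> int (gdist E a y) - int (gdist E b y)"
  proof (rule ccontr)
    assume H: "\<not> ?thesis"
    then have H': "\<forall>x\<in>S. \<forall>y\<in>S. int (gdist E a x) - int (gdist E b x) = int (gdist E a y) - int (gdist E b y)"
      by blast
    show False
    proof (cases "S = {}")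
      case True then show False using res[OF aV bV ab] by blast
    next
      case False
      then obtain x0 where x0: "x0 \<in> S" by blast
      define c where "c = int (gdist E a x0) - int (gdist E b x0)"
      have cx: "\<forall>x\<in>S. int (gdist E a x) = int (gdist E b x) + c" using H' x0 unfolding c_def by fastforce
      show False
      proof (cases "c \<ge> 0")
        case True
        define w where "w = Q (ray_index E Q S + nat c)"
        have "\<forall>x\<in>S. gdist E w x = gdist E a x"
        proof
          fix x assume xS: "x \<in> S"
          have "gdist E w x = gdist E b x + nat c" unfolding w_def Q(2) using pQ xS by blast
          moreover have "int (gdist E a x) = int (gdist E b x) + c" using cx xS by blast
          ultimately show "gdist E w x = gdist E a x" using True by linarith
        qed
        moreover have wV: "w \<in> V" unfolding w_def using ray_in_V[OF assms(1) rQ] .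
        moreover have "w \<noteq> a" using disj P(2) unfolding w_def by blast
        ultimately show False using res[OF wV aV] by auto
      next
        case False
        define w where "w = P (ray_index E P S + nat (- c))"
        have "\<forall>x\<in>S. gdist E w x = gdist E b x"
        proof
          fix x assume xS: "x \<in> S"
          have "gdist E w x = gdist E a x + nat (- c)" unfolding w_def P(2) using pP xS by blast
          moreover have "int (gdist E a x) = int (gdist E b x) + c" using cx xS by blast
          ultimately show "gdist E w x = gdist E b x" using False by linarith
        qed
        moreover have wV: "w \<in> V" unfolding w_def using ray_in_V[OF assms(1) rP] .
        moreover have "w \<noteq> b" using disj Q(2) unfolding w_def by blast
        ultimately show False using res[OF wV bV] by auto
      qed
    qed
  qed
qed

end
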